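(* Let $(G_1,G_2)$ be a two-player game in which each player has two strategies $A,B$, with payoffs $G_1=\begin{bmatrix}g_1^{AA}&g_1^{AB}\\ g_1^{BA}&g_1^{BB}\end{bmatrix}$, $G_2=\begin{bmatrix}g_2^{AA}&g_2^{AB}\\ g_2^{BA}&g_2^{BB}\end{bmatrix}$ (rows indexed by player 1's strategy, columns by player 2's), and suppose both payoffs are nontrivial, i.e. $(g_1^{AA}-g_1^{BA},\,g_1^{AB}-g_1^{BB})\ne(0,0)$ and $(g_2^{AA}-g_2^{AB},\,g_2^{BA}-g_2^{BB})\ne(0,0)$. Define $\theta_1,\theta_2$ by $\theta_1+\frac{\pi}{4}=\mathrm{arctan2}(g_1^{AA}-g_1^{BA},\,g_1^{AB}-g_1^{BB})$ and $\theta_2+\frac{\pi}{4}=\mathrm{arctan2}(g_2^{AA}-g_2^{AB},\,g_2^{BA}-g_2^{BB})$, and set \[ G^{\mathrm{equil}}_1(\theta_1)=\begin{bmatrix}\frac{1}{\sqrt2}\sin(\theta_1+\frac{\pi}{4})&\frac{1}{\sqrt2}\cos(\theta_1+\frac{\pi}{4})\\ -\frac{1}{\sqrt2}\sin(\theta_1+\frac{\pi}{4})&-\frac{1}{\sqrt2}\cos(\theta_1+\frac{\pi}{4})\end{bmatrix},\qquad G^{\mathrm{equil}}_2(\theta_2)=\begin{bmatrix}\frac{1}{\sqrt2}\sin(\theta_2+\frac{\pi}{4})&-\frac{1}{\sqrt2}\sin(\theta_2+\frac{\pi}{4})\\ \frac{1}{\sqrt2}\cos(\theta_2+\frac{\pi}{4})&-\frac{1}{\sqrt2}\cos(\theta_2+\frac{\pi}{4})\end{bmatrix}.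 \] Then the games $(G_1,G_2)$ and $(G^{\mathrm{equil}}_1(\theta_1),G^{\mathrm{equil}}_2(\theta_2))$ have the same set of Nash equilibria, the same set of correlated equilibria, and the same set of coarse correlated equilibria.
   Context: $\mathrm{arctan2}(y,x)$ is the standard two-argument arctangent, the angle $\alpha$ with $(\cos\alpha,\sin\alpha)=(x,y)/\sqrt{x^2+y^2}$. For a finite game with payoffs $G_p$ on joint strategies $a=(a_p,a_{-p})$: a joint distribution $\sigma$ is a correlated equilibrium if for every player $p$ and all $a''_p\ne a'_p$, $\sum_{a_{-p}}\sigma(a''_p,a_{-p})\big(G_p(a'_p,a_{-p})-G_p(a''_p,a_{-p})\big)\le0$; a coarse correlated equilibrium if for every $p$ and $a'_p$, $\sum_a\sigma(a)\big(G_p(a'_p,a_{-p})-G_p(a)\big)\le0$; a Nash equilibrium is a correlated equilibrium that is a product of independent marginals $\sigma(a)=\prod_q\sigma_q(a_q)$. *)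

theory Defs
  imports "HOL-Analysis.Analysis"
begin

datatype strat = A | B

lemma UNIV_strat: "(UNIV :: strat set) = {A, B}"
  by (auto intro: strat.exhaust)

instance strat :: finite
  by standard (simp add: UNIV_strat)

text \<open>A payoff function of a 2x2 two-player game: first argument is player 1's
  strategy (row), second argument player 2's strategy (column).\<close>
type_synonym payoff = "strat \<Rightarrow> strat \<Rightarrow> real"

text \<open>Standard two-argument arctangent: the angle alpha with
  (cos alpha, sin alpha) = (x,y)/|(x,y)|, principal branch (-pi,pi].\<close>
definition arctan2 :: "real \<Rightarrow> real \<Rightarrow> real" where
  "arctan2 y x = Arg (Complex x y)"

definition is_dist :: "(strat \<times> strat \<Rightarrow> real) \<Rightarrow> bool" where
  "is_dist \<sigma> \<longleftrightarrow> (\<forall>a. \<sigma> a \<ge> 0) \<and> (\<Sum>a\<in>UNIV. \<sigma> a) = 1"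

definition is_marginal :: "(strat \<Rightarrow> real) \<Rightarrow> bool" where
  "is_marginal m \<longleftrightarrow> (\<forall>a. m a \<ge> 0) \<and> (\<Sum>a\<in>UNIV. m a) = 1"

definition correlated_eq :: "payoff \<Rightarrow> payoff \<Rightarrow> (strat \<times> strat \<Rightarrow> real) \<Rightarrow> bool" where
  "correlated_eq G1 G2 \<sigma> \<longleftrightarrow> is_dist \<sigma> \<and>
     (\<forall>a'' a'. a'' \<noteq> a' \<longrightarrow> (\<Sum>b\<in>UNIV. \<sigma> (a'', b) * (G1 a' b - G1 a'' b)) \<le> 0) \<and>
     (\<forall>b'' b'. b'' \<noteq> b' \<longrightarrow> (\<Sum>a\<in>UNIV. \<sigma> (a, b'') * (G2 a b' - G2 a b'')) \<le> 0)"

definition coarse_correlated_eq :: "payoff \<Rightarrow> payoff \<Rightarrow> (strat \<times> strat \<Rightarrow> real) \<Rightarrow> bool" where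
  "coarse_correlated_eq G1 G2 \<sigma> \<longleftrightarrow> is_dist \<sigma> \<and>
     (\<forall>a'. (\<Sum>(a, b)\<in>UNIV. \<sigma> (a, b) * (G1 a' b - G1 a b)) \<le> 0) \<and>
     (\<forall>b'. (\<Sum>(a, b)\<in>UNIV. \<sigma> (a, b) * (G2 a b' - G2 a b)) \<le> 0)"

definition nash_eq :: "payoff \<Rightarrow> payoff \<Rightarrow> (strat \<times> strat \<Rightarrow> real) \<Rightarrow> bool" where
  "nash_eq G1 G2 \<sigma> \<longleftrightarrow> correlated_eq G1 G2 \<sigma> \<and>
     (\<exists>m1 m2. is_marginal m1 \<and> is_marginal m2 \<and> (\<forall>a b. \<sigma> (a, b) = m1 a * m2 b))"

definition Gequil1 :: "real \<Rightarrow> payoff" where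
  "Gequil1 \<theta> = (\<lambda>a b.
     (if a = A then 1 else -1) / sqrt 2 *
     (if b = A then sin (\<theta> + pi/4) else cos (\<theta> + pi/4)))"

definition Gequil2 :: "real \<Rightarrow> payoff" where
  "Gequil2 \<theta> = (\<lambda>a b.
     (if b = A then 1 else -1) / sqrt 2 *
     (if a = A then sin (\<theta> + pi/4) else cos (\<theta> + pi/4)))"

end

theory Submission
  imports Defs
begin

lemma all_strat: "(\<forall>x::strat. P x) = (P A \<and> P B)"
  by (metis strat.exhaust)

lemma sum_strat: "(\<Sum>x\<in>(UNIV::strat set). f x) = f A + f B"
  by (simp add: UNIV_strat)

lemma sum_strat2: "(\<Sum>x\<in>(UNIV::(strat\<times>strat) set). f x) = f (A,A) + f (A,B) + f (B,A) + f (B,B)"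
proof -
  have "(UNIV::(strat\<times>strat) set) = {A,B} \<times> {A,B}" by (simp add: UNIV_strat UNIV_Times_UNIV[symmetric] del: UNIV_Times_UNIV)
  note eq = this
  show ?thesis unfolding eq by (simp add: add.assoc)
qed

lemma pos_le0: "(c::real) > 0 \<Longrightarrow> X' = c * X \<Longrightarrow> (X' \<le> 0) = (X \<le> 0)"
  by (simp add: mult_le_0_iff)

lemma equiv_games:
  fixes G1 G2 H1 H2 :: payoff and c1 c2 :: real
  assumes c1: "c1 > 0" and c2: "c2 > 0"
    and d1: "\<And>b. H1 A b - H1 B b = c1 * (G1 A b - G1 B b)"
    and d2: "\<And>a. H2 a A - H2 a B = c2 * (G2 a A - G2 a B)"
  shows "correlated_eq G1 G2 \<sigma> = correlated_eq H1 H2 \<sigma>"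
    and "coarse_correlated_eq G1 G2 \<sigma> = coarse_correlated_eq H1 H2 \<sigma>"
proof -
  have e1: "H1 B b - H1 A b = c1 * (G1 B b - G1 A b)" for b using d1[of b] by (simp add: algebra_simps)
  have e2: "H2 a B - H2 a A = c2 * (G2 a B - G2 a A)" for a using d2[of a] by (simp add: algebra_simps)
  have q: "\<And>s t u v. (s * (H1 B A - H1 A A) + t * (H1 B B - H1 A B) \<le> 0) = (s * (G1 B A - G1 A A) + t * (G1 B B - G1 A B) \<le> 0)"
    by (rule pos_le0[OF c1]) (simp add: e1 algebra_simps)
  have q2: "\<And>s t. (s * (H1 A A - H1 B A) + t * (H1 A B - H1 B B) \<le> 0) = (s * (G1 A A - G1 B A) + t * (G1 A B - G1 B B) \<le> 0)"
    by (rule pos_le0[OF c1]) (simp add: d1 algebra_simps)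
  have q3: "\<And>s t. (s * (H2 A B - H2 A A) + t * (H2 B B - H2 B A) \<le> 0) = (s * (G2 A B - G2 A A) + t * (G2 B B - G2 B A) \<le> 0)"
    by (rule pos_le0[OF c2]) (simp add: e2 algebra_simps)
  have q4: "\<And>s t. (s * (H2 A A - H2 A B) + t * (H2 B A - H2 B B) \<le> 0) = (s * (G2 A A - G2 A B) + t * (G2 B A - G2 B B) \<le> 0)"
    by (rule pos_le0[OF c2]) (simp add: d2 algebra_simps)
  show "correlated_eq G1 G2 \<sigma> = correlated_eq H1 H2 \<sigma>"
    unfolding correlated_eq_def all_strat sum_strat using q q2 q3 q4 by simp
  show "coarse_correlated_eq G1 G2 \<sigma> = coarse_correlated_eq H1 H2 \<sigma>"
    unfolding coarse_correlated_eq_def all_strat sum_strat2 using q q2 q3 q4 by simp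
qed

lemma equil1_diff:
  fixes x y :: real
  assumes nz: "(x, y) \<noteq> (0, 0)" and th: "\<theta> + pi/4 = arctan2 x y"
  shows "Gequil1 \<theta> A A - Gequil1 \<theta> B A = (sqrt 2 / cmod (Complex y x)) * x"
    and "Gequil1 \<theta> A B - Gequil1 \<theta> B B = (sqrt 2 / cmod (Complex y x)) * y"
    and "Gequil2 \<theta> A A - Gequil2 \<theta> A B = (sqrt 2 / cmod (Complex y x)) * x"
    and "Gequil2 \<theta> B A - Gequil2 \<theta> B B = (sqrt 2 / cmod (Complex y x)) * y"
    and "sqrt 2 / cmod (Complex y x) > 0"
proof -
  have z: "Complex y x \<noteq> 0" using nz by (auto simp: complex_eq_iff)
  have s: "sin (\<theta> + pi/4) = x / cmod (Complex y x)"
    using sin_Arg[OF z] th by (simp add: arctan2_def)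
  have c: "cos (\<theta> + pi/4) = y / cmod (Complex y x)"
    using cos_Arg[OF z] th by (simp add: arctan2_def)
  have r2: "2 * u / (sqrt 2 * r) = sqrt 2 * u / r" for u r :: real
  proof -
    have "2 * u / (sqrt 2 * r) = (sqrt 2 * (sqrt 2 * u)) / (sqrt 2 * r)" by (simp only: mult.assoc[symmetric] real_sqrt_mult_self)
    also have "... = sqrt 2 * u / r" by (rule mult_divide_mult_cancel_left) simp
    finally show ?thesis .
  qed
  show "Gequil1 \<theta> A A - Gequil1 \<theta> B A = (sqrt 2 / cmod (Complex y x)) * x"
    "Gequil1 \<theta> A B - Gequil1 \<theta> B B = (sqrt 2 / cmod (Complex y x)) * y"
    "Gequil2 \<theta> A A - Gequil2 \<theta> A B = (sqrt 2 / cmod (Complex y x)) * x"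
    "Gequil2 \<theta> B A - Gequil2 \<theta> B B = (sqrt 2 / cmod (Complex y x)) * y"
    unfolding Gequil1_def Gequil2_def using r2 s c by simp_all
  show "sqrt 2 / cmod (Complex y x) > 0" using z by simp
qed

theorem mainTheorem3:
  fixes G1 G2 :: payoff and \<theta>1 \<theta>2 :: real
  assumes nt1: "(G1 A A - G1 B A, G1 A B - G1 B B) \<noteq> (0, 0)"
    and nt2: "(G2 A A - G2 A B, G2 B A - G2 B B) \<noteq> (0, 0)"
    and th1: "\<theta>1 + pi/4 = arctan2 (G1 A A - G1 B A) (G1 A B - G1 B B)"
    and th2: "\<theta>2 + pi/4 = arctan2 (G2 A A - G2 A B) (G2 B A - G2 B B)"
  shows "{\<sigma>. nash_eq G1 G2 \<sigma>} = {\<sigma>. nash_eq (Gequil1 \<theta>1) (Gequil2 \<theta>2) \<sigma>}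
       \<and> {\<sigma>. correlated_eq G1 G2 \<sigma>} = {\<sigma>. correlated_eq (Gequil1 \<theta>1) (Gequil2 \<theta>2) \<sigma>}
       \<and> {\<sigma>. coarse_correlated_eq G1 G2 \<sigma>}
           = {\<sigma>. coarse_correlated_eq (Gequil1 \<theta>1) (Gequil2 \<theta>2) \<sigma>}"
proof -
  note E1 = equil1_diff[OF nt1 th1]
  note E2 = equil1_diff[OF nt2 th2]
  have d1: "Gequil1 \<theta>1 A b - Gequil1 \<theta>1 B b
      = (sqrt 2 / cmod (Complex (G1 A B - G1 B B) (G1 A A - G1 B A))) * (G1 A b - G1 B b)" for b
    using E1(1,2) by (cases b) simp_all
  have d2: "Gequil2 \<theta>2 a A - Gequil2 \<theta>2 a B
      = (sqrt 2 / cmod (Complex (G2 B A - G2 B B) (G2 A A - G2 A B))) * (G2 a A - G2 a B)" for a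
    using E2(3,4) by (cases a) simp_all
  have EG1: "correlated_eq G1 G2 \<sigma> = correlated_eq (Gequil1 \<theta>1) (Gequil2 \<theta>2) \<sigma>" for \<sigma>
    by (rule equiv_games(1)[OF E1(5) E2(5)]) (simp_all add: d1 d2)
  have EG2: "coarse_correlated_eq G1 G2 \<sigma> = coarse_correlated_eq (Gequil1 \<theta>1) (Gequil2 \<theta>2) \<sigma>" for \<sigma>
    by (rule equiv_games(2)[OF E1(5) E2(5)]) (simp_all add: d1 d2)
  note EG = EG1 EG2
  show ?thesis unfolding nash_eq_def using EG by auto
qed

end
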